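(* Let $0<\varepsilon<1/5$ and let $G$ be a bipartite graph on $n$ vertices with partition classes $V_1,V_2$ of equal size, such that $G$ has minimum degree at least $(1-\varepsilon)n/2$. If the edges of $G$ are coloured red and blue and this colouring is not a split colouring, then there are two vertex-disjoint connected matchings of distinct colours (one red, one blue) that together cover all but at most $4\varepsilon n$ vertices of $G$.
   Context: The edge colouring is an arbitrary red/blue assignment. For a bipartite graph with partition classes $U,V$, a red/blue edge colouring is a split colouring if there are partitions $U=A\cup B$ and $V=C\cup D$ (some of these sets may be empty) such that all edges of the graph between $A$ and $C$ and between $B$ and $D$ are blue, and all edges of the graph between $A$ and $D$ and between $B$ and $C$ are red. A monochromatic matching is called connected if all its edges lie in a single connected component of the subgraph formed by the edges of that colour. Matchings may be empty. *)

theory Defs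
  imports Complex_Main "HOL-Library.Disjoint_Sets"
begin

definition bipartite_graph :: "'a set \<Rightarrow> 'a set \<Rightarrow> 'a set set \<Rightarrow> bool" where
  "bipartite_graph V1 V2 E \<longleftrightarrow> finite V1 \<and> finite V2 \<and> V1 \<inter> V2 = {} \<and>
     E \<subseteq> {{u, v} | u v. u \<in> V1 \<and> v \<in> V2}"

definition degree :: "'a set set \<Rightarrow> 'a \<Rightarrow> nat" where
  "degree E u = card {v. {u, v} \<in> E}"

text \<open>A red/blue colouring is given by the set R of red edges; the blue edges are E - R.
  Split colouring with respect to the partition classes U = V1, V = V2.\<close>

definition split_colouring :: "'a set \<Rightarrow> 'a set \<Rightarrow> 'a set set \<Rightarrow> 'a set set \<Rightarrow> bool" where
  "split_colouring V1 V2 E R \<longleftrightarrow>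
     (\<exists>A B C D. A \<union> B = V1 \<and> A \<inter> B = {} \<and> C \<union> D = V2 \<and> C \<inter> D = {} \<and>
        (\<forall>a\<in>A. \<forall>c\<in>C. {a, c} \<in> E \<longrightarrow> {a, c} \<in> E - R) \<and>
        (\<forall>b\<in>B. \<forall>d\<in>D. {b, d} \<in> E \<longrightarrow> {b, d} \<in> E - R) \<and>
        (\<forall>a\<in>A. \<forall>d\<in>D. {a, d} \<in> E \<longrightarrow> {a, d} \<in> R) \<and>
        (\<forall>b\<in>B. \<forall>c\<in>C. {b, c} \<in> E \<longrightarrow> {b, c} \<in> R))"

definition matching :: "'a set set \<Rightarrow> 'a set set \<Rightarrow> bool" where
  "matching F M \<longleftrightarrow> M \<subseteq> F \<and> disjoint M"

text \<open>Adjacency relation of the graph formed by the edge set F; its reflexive-transitive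
  closure is "lies in the same connected component".\<close>

definition adj :: "'a set set \<Rightarrow> ('a \<times> 'a) set" where
  "adj F = {(u, v). {u, v} \<in> F}"

definition connected_matching :: "'a set set \<Rightarrow> 'a set set \<Rightarrow> bool" where
  "connected_matching F M \<longleftrightarrow> matching F M \<and>
     (\<forall>e\<in>M. \<forall>f\<in>M. \<forall>u\<in>e. \<forall>v\<in>f. (u, v) \<in> (adj F)\<^sup>*)"

end

theory Submission
  imports Defs
begin

lemma hall:
  fixes N :: "'x \<Rightarrow> 'y set"
  assumes "finite X" "\<forall>x\<in>X. finite (N x)" "\<forall>S\<subseteq>X. card S \<le> card (\<Union>(N ` S))"
  shows "\<exists>f. inj_on f X \<and> (\<forall>x\<in>X. f x \<in> N x)"
  using assms
proof (induction "card X" arbitrary: X N rule: less_induct)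
  case less
  show ?case
  proof (cases "X = {}")
    case True then show ?thesis by auto
  next
    case ne: False
    show ?thesis
    proof (cases "\<forall>S. S \<subseteq> X \<longrightarrow> S \<noteq> {} \<longrightarrow> S \<noteq> X \<longrightarrow> card S < card (\<Union>(N ` S))")
      case True
      from ne obtain x where x: "x \<in> X" by auto
      have "card {x} \<le> card (\<Union>(N ` {x}))" using less.prems(3) x by auto
      hence "N x \<noteq> {}" by auto
      then obtain y where y: "y \<in> N x" by auto
      define X' where "X' = X - {x}"
      define N' where "N' = (\<lambda>z. N z - {y})"
      have cX': "card X' < card X" using x less.prems(1) unfolding X'_def by (meson card_Diff1_less)
      have hall': "\<forall>S\<subseteq>X'. card S \<le> card (\<Union>(N' ` S))"
      proof (intro allI impI)
        fix S assume S: "S \<subseteq> X'"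
        show "card S \<le> card (\<Union>(N' ` S))"
        proof (cases "S = {}")
          case True then show ?thesis by simp
        next
          case False
          have SX: "S \<subseteq> X" "S \<noteq> X" using S x unfolding X'_def by auto
          hence lt: "card S < card (\<Union>(N ` S))" using True False by auto
          have "finite S" using SX less.prems(1) finite_subset by auto
          hence fin: "finite (\<Union>(N ` S))" using SX less.prems(2) by auto
          have "\<Union>(N' ` S) = \<Union>(N ` S) - {y}" unfolding N'_def by auto
          hence "card (\<Union>(N' ` S)) \<ge> card (\<Union>(N ` S)) - 1" using fin by (simp add: card_Diff_singleton_if)
          then show ?thesis using lt by linarith
        qed
      qed
      have "finite X'" using less.prems(1) unfolding X'_def by auto
      moreover have "\<forall>z\<in>X'. finite (N' z)" using less.prems(2) unfolding X'_def N'_def by auto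
      ultimately obtain f where f: "inj_on f X'" "\<forall>z\<in>X'. f z \<in> N' z"
        using less.hyps[OF cX'] hall' by blast
      define g where "g = f(x := y)"
      have XX: "X = insert x X'" using x unfolding X'_def by auto
      have "x \<notin> X'" unfolding X'_def by auto
      have "inj_on g X'" using f(1) \<open>x \<notin> X'\<close> unfolding g_def inj_on_def by auto
      moreover have "g x \<notin> g ` X'" using f(2) \<open>x \<notin> X'\<close> unfolding g_def N'_def by auto
      ultimately have "inj_on g X" unfolding XX by auto
      moreover have "\<forall>z\<in>X. g z \<in> N z" using f(2) y unfolding g_def N'_def XX by auto
      ultimately show ?thesis by blast
    next
      case False
      then obtain S0 where S0: "S0 \<subseteq> X" "S0 \<noteq> {}" "S0 \<noteq> X" "card (\<Union>(N ` S0)) \<le> card S0"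
        by (auto simp: not_less)
      have finS0: "finite S0" using S0(1) less.prems(1) finite_subset by auto
      have c1: "card S0 < card X" using S0 less.prems(1) by (meson psubsetI psubset_card_mono)
      obtain f1 where f1: "inj_on f1 S0" "\<forall>z\<in>S0. f1 z \<in> N z"
        using less.hyps[OF c1, of N] finS0 less.prems(2,3) S0(1) by auto
      define U0 where "U0 = \<Union>(N ` S0)"
      have finU0: "finite U0" unfolding U0_def using finS0 S0(1) less.prems(2) by auto
      define X2 where "X2 = X - S0"
      define N2 where "N2 = (\<lambda>z. N z - U0)"
      have c2: "card X2 < card X"
      proof -
        have "card X2 = card X - card S0" unfolding X2_def using S0(1) finS0 by (simp add: card_Diff_subset)
        moreover have "card S0 > 0" using finS0 S0(2) by auto
        moreover have "card S0 \<le> card X" using c1 by simp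
        ultimately show ?thesis by linarith
      qed
      have hall2: "\<forall>S\<subseteq>X2. card S \<le> card (\<Union>(N2 ` S))"
      proof (intro allI impI)
        fix S assume S: "S \<subseteq> X2"
        have SS: "S \<union> S0 \<subseteq> X" using S S0(1) unfolding X2_def by auto
        have finS: "finite S" using S less.prems(1) unfolding X2_def by (meson finite_Diff finite_subset)
        have dis: "S \<inter> S0 = {}" using S unfolding X2_def by auto
        have eq: "\<Union>(N2 ` S) = \<Union>(N ` (S \<union> S0)) - U0" unfolding N2_def U0_def by auto
        have finU: "finite (\<Union>(N ` (S \<union> S0)))" using SS finS finS0 less.prems(2) by auto
        have sub: "U0 \<subseteq> \<Union>(N ` (S \<union> S0))" unfolding U0_def by auto
        have "card (\<Union>(N2 ` S)) = card (\<Union>(N ` (S \<union> S0))) - card U0"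
          unfolding eq using finU sub by (simp add: card_Diff_subset finite_subset)
        moreover have "card (S \<union> S0) \<le> card (\<Union>(N ` (S \<union> S0)))" using less.prems(3) SS by blast
        moreover have "card (S \<union> S0) = card S + card S0" using finS finS0 dis by (simp add: card_Un_disjoint)
        moreover have "card U0 \<le> card S0" using S0(4) unfolding U0_def by auto
        ultimately show "card S \<le> card (\<Union>(N2 ` S))" by linarith
      qed
      have "finite X2" using less.prems(1) unfolding X2_def by auto
      moreover have "\<forall>z\<in>X2. finite (N2 z)" using less.prems(2) unfolding X2_def N2_def by auto
      ultimately obtain f2 where f2: "inj_on f2 X2" "\<forall>z\<in>X2. f2 z \<in> N2 z"
        using less.hyps[OF c2] hall2 by blast
      define g where "g = (\<lambda>z. if z \<in> S0 then f1 z else f2 z)"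
      have "inj_on g X"
        unfolding inj_on_def
      proof (intro ballI impI)
        fix a b assume ab: "a \<in> X" "b \<in> X" "g a = g b"
        show "a = b"
        proof (cases "a \<in> S0"; cases "b \<in> S0")
          assume "a \<in> S0" "b \<in> S0" thus ?thesis using ab f1(1) unfolding g_def inj_on_def by auto
        next
          assume "a \<notin> S0" "b \<notin> S0" thus ?thesis using ab f2(1) unfolding g_def inj_on_def X2_def by auto
        next
          assume "a \<in> S0" "b \<notin> S0"
          hence "g a \<in> U0" "g b \<notin> U0" using f1(2) f2(2) ab unfolding g_def U0_def N2_def X2_def by auto
          thus ?thesis using ab by auto
        next
          assume h: "a \<notin> S0" "b \<in> S0"
          have "g b \<in> U0" using f1(2) h unfolding g_def U0_def by auto
          moreover have "g a \<notin> U0" using f2(2) h ab(1) unfolding g_def N2_def X2_def by auto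
          ultimately show ?thesis using ab by auto
        qed
      qed
      moreover have "\<forall>z\<in>X. g z \<in> N z" using f1(2) f2(2) unfolding g_def N2_def X2_def by auto
      ultimately show ?thesis by blast
    qed
  qed
qed


lemma hall_def:
  fixes N :: "'x \<Rightarrow> 'y set" and d :: nat
  assumes fin: "finite X" "\<forall>x\<in>X. finite (N x)" and h: "\<forall>S\<subseteq>X. card S \<le> card (\<Union>(N ` S)) + d"
  shows "\<exists>A f. A \<subseteq> X \<and> card X \<le> card A + d \<and> inj_on f A \<and> (\<forall>x\<in>A. f x \<in> N x)"
proof -
  define N' :: "'x \<Rightarrow> ('y + nat) set" where "N' = (\<lambda>x. Inl ` N x \<union> Inr ` {..<d})"
  have "\<forall>S\<subseteq>X. card S \<le> card (\<Union>(N' ` S))"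
  proof (intro allI impI)
    fix S assume S: "S \<subseteq> X"
    show "card S \<le> card (\<Union>(N' ` S))"
    proof (cases "S = {}")
      case True then show ?thesis by simp
    next
      case False
      have finS: "finite S" using S fin(1) finite_subset by auto
      have eq: "\<Union>(N' ` S) = Inl ` (\<Union>(N ` S)) \<union> Inr ` {..<d}" using False unfolding N'_def by auto
      have f1: "finite (\<Union>(N ` S))" using finS S fin(2) by auto
      have "card (\<Union>(N' ` S)) = card (Inl ` (\<Union>(N ` S)) :: ('y+nat) set) + card (Inr ` {..<d} :: ('y+nat) set)"
        unfolding eq by (rule card_Un_disjoint) (use f1 in auto)
      also have "\<dots> = card (\<Union>(N ` S)) + d" by (simp add: card_image)
      finally show ?thesis using h S by auto
    qed
  qed
  moreover have "\<forall>x\<in>X. finite (N' x)" using fin(2) unfolding N'_def by auto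
  ultimately obtain g where g: "inj_on g X" "\<forall>x\<in>X. g x \<in> N' x" using hall fin(1) by blast
  define A where "A = {x\<in>X. isl (g x)}"
  define f where "f = (\<lambda>x. projl (g x))"
  have "g ` (X - A) \<subseteq> Inr ` {..<d}" using g(2) unfolding A_def N'_def by auto
  hence "card (g ` (X - A)) \<le> d"
    by (metis card_image card_lessThan card_mono finite_imageI finite_lessThan inj_Inr inj_on_subset subset_UNIV)
  moreover have "card (g ` (X - A)) = card (X - A)" using g(1) by (simp add: card_image inj_on_subset)
  moreover have "card X = card A + card (X - A)" unfolding A_def using fin(1)
    by (metis (no_types, lifting) card_Diff_subset card_mono diff_add_inverse le_add_diff_inverse mem_Collect_eq subsetI finite_subset)
  ultimately have c: "card X \<le> card A + d" by linarith
  have gA: "\<forall>x\<in>A. g x = Inl (f x)" unfolding A_def f_def by auto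
  have "inj_on f A"
    unfolding inj_on_def
  proof (intro ballI impI)
    fix a b assume "a \<in> A" "b \<in> A" "f a = f b"
    hence "g a = g b" using gA by auto
    thus "a = b" using g(1) \<open>a \<in> A\<close> \<open>b \<in> A\<close> unfolding inj_on_def A_def by auto
  qed
  moreover have "\<forall>x\<in>A. f x \<in> N x"
  proof
    fix x assume x: "x \<in> A"
    have "g x \<in> N' x" using g(2) x unfolding A_def by auto
    thus "f x \<in> N x" using gA x unfolding N'_def by auto
  qed
  moreover have "A \<subseteq> X" unfolding A_def by auto
  ultimately show ?thesis using c by blast
qed


definition closedc :: "'a set set \<Rightarrow> 'a set \<Rightarrow> bool" where
  "closedc Q C \<longleftrightarrow> (\<forall>u v. {u,v} \<in> Q \<longrightarrow> u \<in> C \<longrightarrow> v \<in> C)"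
definition connc :: "'a set set \<Rightarrow> 'a set \<Rightarrow> bool" where
  "connc Q C \<longleftrightarrow> (\<forall>u\<in>C. \<forall>v\<in>C. (u,v) \<in> (adj Q)\<^sup>*)"
definition compc :: "'a set set \<Rightarrow> 'a \<Rightarrow> 'a set" where
  "compc Q u = {v. (u,v) \<in> (adj Q)\<^sup>*}"
definition Hset :: "'a set set \<Rightarrow> 'a set set \<Rightarrow> 'a set \<Rightarrow> 'a set \<Rightarrow> 'a set set" where
  "Hset R B Cr Cb = {e. (e \<in> R \<and> e \<subseteq> Cr) \<or> (e \<in> B \<and> e \<subseteq> Cb)}"
definition good :: "'a set set \<Rightarrow> 'a set set \<Rightarrow> nat \<Rightarrow> real \<Rightarrow> bool" where
  "good R B m \<delta> \<longleftrightarrow> (\<exists>Cr Cb F. connc R Cr \<and> connc B Cb \<and> F \<subseteq> Hset R B Cr Cb \<and> disjoint F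
      \<and> finite F \<and> real m - 4*\<delta> \<le> real (card F))"
definition splitRB :: "'a set \<Rightarrow> 'a set \<Rightarrow> 'a set set \<Rightarrow> 'a set set \<Rightarrow> bool" where
  "splitRB X Y R B \<longleftrightarrow> (\<exists>A A' C D. A \<union> A' = X \<and> A \<inter> A' = {} \<and> C \<union> D = Y \<and> C \<inter> D = {} \<and>
     (\<forall>a\<in>A. \<forall>c\<in>C. {a,c} \<notin> R) \<and> (\<forall>b\<in>A'. \<forall>d\<in>D. {b,d} \<notin> R) \<and>
     (\<forall>a\<in>A. \<forall>d\<in>D. {a,d} \<notin> B) \<and> (\<forall>b\<in>A'. \<forall>c\<in>C. {b,c} \<notin> B))"

lemma splitRB_swapc: "splitRB X Y B R \<Longrightarrow> splitRB X Y R B"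
proof -
  assume "splitRB X Y B R"
  then obtain A A' C D where h: "A \<union> A' = X" "A \<inter> A' = {}" "C \<union> D = Y" "C \<inter> D = {}"
    "\<forall>a\<in>A. \<forall>c\<in>C. {a,c} \<notin> B" "\<forall>b\<in>A'. \<forall>d\<in>D. {b,d} \<notin> B"
    "\<forall>a\<in>A. \<forall>d\<in>D. {a,d} \<notin> R" "\<forall>b\<in>A'. \<forall>c\<in>C. {b,c} \<notin> R"
    unfolding splitRB_def by blast
  have "D \<union> C = Y" "D \<inter> C = {}" using h(3,4) by auto
  then show ?thesis unfolding splitRB_def using h(1,2,5-8) by blast
qed

lemma splitRB_swapXY: "splitRB Y X R B \<Longrightarrow> splitRB X Y R B"
proof -
  assume "splitRB Y X R B"
  then obtain A A' C D where h: "A \<union> A' = Y" "A \<inter> A' = {}" "C \<union> D = X" "C \<inter> D = {}"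
    "\<forall>a\<in>A. \<forall>c\<in>C. {a,c} \<notin> R" "\<forall>b\<in>A'. \<forall>d\<in>D. {b,d} \<notin> R"
    "\<forall>a\<in>A. \<forall>d\<in>D. {a,d} \<notin> B" "\<forall>b\<in>A'. \<forall>c\<in>C. {b,c} \<notin> B"
    unfolding splitRB_def by blast
  have "\<forall>a\<in>C. \<forall>c\<in>A. {a,c} \<notin> R" using h(5) by (metis insert_commute)
  moreover have "\<forall>a\<in>D. \<forall>c\<in>A'. {a,c} \<notin> R" using h(6) by (metis insert_commute)
  moreover have "\<forall>a\<in>C. \<forall>c\<in>A'. {a,c} \<notin> B" using h(8) by (metis insert_commute)
  moreover have "\<forall>a\<in>D. \<forall>c\<in>A. {a,c} \<notin> B" using h(7) by (metis insert_commute)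
  ultimately show ?thesis unfolding splitRB_def using h(1-4) by blast
qed

lemma good_swap: "good B R m \<delta> \<Longrightarrow> good R B m \<delta>"
proof -
  assume "good B R m \<delta>"
  then obtain Cr Cb F where h: "connc B Cr" "connc R Cb" "F \<subseteq> Hset B R Cr Cb" "disjoint F"
      "finite F" "real m - 4*\<delta> \<le> real (card F)" unfolding good_def by blast
  have "Hset B R Cr Cb = Hset R B Cb Cr" unfolding Hset_def by auto
  then show ?thesis unfolding good_def using h by metis
qed

lemma adj_sym: "(u,v) \<in> adj Q \<Longrightarrow> (v,u) \<in> adj Q" by (simp add: adj_def insert_commute)

lemma rt_sym: "(u,v) \<in> (adj Q)\<^sup>* \<Longrightarrow> (v,u) \<in> (adj Q)\<^sup>*"
proof (induction rule: rtrancl_induct)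
  case base then show ?case by simp
next
  case (step y z) then show ?case by (meson adj_sym converse_rtrancl_into_rtrancl)
qed

lemma comp_self: "u \<in> compc Q u" by (simp add: compc_def)

lemma comp_conn: "connc Q (compc Q u)"
  unfolding connc_def compc_def by (auto intro: rtrancl_trans rt_sym)

lemma comp_closed: "closedc Q (compc Q u)"
  unfolding closedc_def compc_def adj_def by (auto intro: rtrancl_into_rtrancl)

lemma conn_sub_comp: "connc Q C \<Longrightarrow> u \<in> C \<Longrightarrow> C \<subseteq> compc Q u"
  unfolding connc_def compc_def by auto

lemma closed_rt: "(u,v) \<in> (adj Q)\<^sup>* \<Longrightarrow> closedc Q C \<Longrightarrow> u \<in> C \<Longrightarrow> v \<in> C"
  by (induction rule: rtrancl_induct) (auto simp: closedc_def adj_def)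

lemma conn_empty: "connc Q {}" by (simp add: connc_def)
lemma closed_empty: "closedc Q {}" by (simp add: closedc_def)

lemma conn_union:
  assumes "connc Q A" "connc Q B" "a \<in> A" "b \<in> B" "(a,b) \<in> (adj Q)\<^sup>*"
  shows "connc Q (A \<union> B)"
  unfolding connc_def
proof (intro ballI)
  fix u v assume u: "u \<in> A \<union> B" and v: "v \<in> A \<union> B"
  have ab: "(b,a) \<in> (adj Q)\<^sup>*" by (rule rt_sym[OF assms(5)])
  show "(u,v) \<in> (adj Q)\<^sup>*"
  proof (cases "u \<in> A")
    case True
    show ?thesis
    proof (cases "v \<in> A")
      case True then show ?thesis using \<open>u \<in> A\<close> assms(1) unfolding connc_def by auto
    next
      case False then have "v \<in> B" using v by auto
      thus ?thesis using assms \<open>u \<in> A\<close> unfolding connc_def by (meson rtrancl_trans)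
    qed
  next
    case False then have uB: "u \<in> B" using u by auto
    show ?thesis
    proof (cases "v \<in> B")
      case True then show ?thesis using uB assms(2) unfolding connc_def by auto
    next
      case False then have "v \<in> A" using v by auto
      thus ?thesis using assms uB ab unfolding connc_def by (meson rtrancl_trans)
    qed
  qed
qed

lemma edge_adj: "{u,v} \<in> Q \<Longrightarrow> (u,v) \<in> (adj Q)\<^sup>*" by (auto simp: adj_def)


locale bsetup =
  fixes X Y :: "'a set" and E R B :: "'a set set" and m :: nat and \<delta> :: real
  assumes finX: "finite X" and finY: "finite Y" and disj: "X \<inter> Y = {}"
    and cX: "card X = m" and cY: "card Y = m"
    and Esub: "\<forall>e\<in>E. \<exists>x\<in>X. \<exists>y\<in>Y. e = {x,y}"
    and RB: "R \<union> B = E" and RBd: "R \<inter> B = {}"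
    and deg: "\<forall>u\<in>X\<union>Y. real m - \<delta> \<le> real (card {v. {u,v} \<in> E})"
    and dpos: "0 \<le> \<delta>" and dm: "5*\<delta> < real m"
    and nsplit: "\<not> splitRB X Y R B"
begin

lemma swapXY: "bsetup Y X E R B m \<delta>"
proof -
  have "\<forall>e\<in>E. \<exists>x\<in>Y. \<exists>y\<in>X. e = {x,y}" using Esub by (metis insert_commute)
  moreover have "\<not> splitRB Y X R B" using nsplit splitRB_swapXY by blast
  ultimately show ?thesis unfolding bsetup_def using finX finY disj cX cY RB RBd deg dpos dm
    by (simp add: Un_commute Int_commute)
qed

lemma swapRB: "bsetup X Y E B R m \<delta>"
proof -
  have "\<not> splitRB X Y B R" using nsplit splitRB_swapc by blast
  then show ?thesis unfolding bsetup_def using finX finY disj cX cY Esub RB RBd deg dpos dm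
    by (simp add: Un_commute Int_commute)
qed

lemma nbrY: assumes "u \<in> X" "{u,v} \<in> E" shows "v \<in> Y"
proof -
  obtain x y where xy: "x \<in> X" "y \<in> Y" "{u,v} = {x,y}" using Esub assms(2) by auto
  then have "(u = x \<and> v = y) \<or> (u = y \<and> v = x)" by (simp add: doubleton_eq_iff)
  then show ?thesis using xy assms(1) disj by auto
qed

lemma edge_sub: "e \<in> E \<Longrightarrow> e \<subseteq> X \<union> Y" using Esub by fastforce

lemma finE: "finite E"
proof -
  have "E \<subseteq> (\<lambda>(x,y). {x,y}) ` (X \<times> Y)" using Esub by auto
  then show ?thesis using finX finY finite_subset by blast
qed

lemma N_sub: "u \<in> X \<Longrightarrow> {v. {u,v} \<in> E} \<subseteq> Y" using nbrY by blast

lemma miss: assumes "u \<in> X" shows "real (card (Y - {v. {u,v} \<in> E})) \<le> \<delta>"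
proof -
  let ?N = "{v. {u,v} \<in> E}"
  have sub: "?N \<subseteq> Y" using N_sub assms by blast
  have fN: "finite ?N" using sub finY finite_subset by blast
  have "card (Y - ?N) = card Y - card ?N" using sub fN by (simp add: card_Diff_subset)
  moreover have "card ?N \<le> card Y" using sub finY card_mono by blast
  moreover have "real m - \<delta> \<le> real (card ?N)" using deg assms by auto
  ultimately show ?thesis using cY by (simp add: of_nat_diff)
qed

lemma one_nbr: assumes "u \<in> X" "T \<subseteq> Y" "\<delta> < real (card T)" shows "\<exists>t\<in>T. {u,t} \<in> E"
proof (rule ccontr)
  assume "\<not> ?thesis"
  then have "T \<subseteq> Y - {v. {u,v} \<in> E}" using assms(2) by auto
  then have "card T \<le> card (Y - {v. {u,v} \<in> E})" using finY by (meson card_mono finite_Diff)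
  then show False using miss[OF assms(1)] assms(3) by linarith
qed

lemma common_nbr: assumes "u \<in> X" "u' \<in> X" "T \<subseteq> Y" "2*\<delta> < real (card T)"
  shows "\<exists>t\<in>T. {u,t} \<in> E \<and> {u',t} \<in> E"
proof (rule ccontr)
  assume "\<not> ?thesis"
  then have "T \<subseteq> (Y - {v. {u,v} \<in> E}) \<union> (Y - {v. {u',v} \<in> E})" using assms(3) by auto
  then have "card T \<le> card ((Y - {v. {u,v} \<in> E}) \<union> (Y - {v. {u',v} \<in> E}))" using finY
    by (meson card_mono finite_Diff finite_UnI)
  also have "\<dots> \<le> card (Y - {v. {u,v} \<in> E}) + card (Y - {v. {u',v} \<in> E})" by (rule card_Un_le)
  finally show False using miss[OF assms(1)] miss[OF assms(2)] assms(4) by linarith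
qed

lemma L1:
  assumes S: "S \<subseteq> X" and T: "T \<subseteq> Y" and cT: "2*\<delta> < real (card T)" and cS: "\<delta> < real (card S)"
    and col: "\<forall>s\<in>S. \<forall>t\<in>T. {s,t} \<in> E \<longrightarrow> {s,t} \<in> Q"
  shows "connc Q (S \<union> T)"
proof -
  have "S \<noteq> {}" using cS dpos by auto
  then obtain s0 where s0: "s0 \<in> S" by auto
  have cs: "(s0,v) \<in> (adj Q)\<^sup>*" if v: "v \<in> S" for v
  proof -
    obtain t where t: "t \<in> T" "{s0,t} \<in> E" "{v,t} \<in> E" using common_nbr[of s0 v T] s0 v S T cT by auto
    have "{s0,t} \<in> Q" "{t,v} \<in> Q" using col s0 v t by (auto simp: insert_commute)
    then show ?thesis by (meson edge_adj rtrancl_trans)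
  qed
  have ct: "(s0,v) \<in> (adj Q)\<^sup>*" if v: "v \<in> T" for v
  proof -
    have vY: "v \<in> Y" using v T by auto
    obtain s where s: "s \<in> S" "{v,s} \<in> E" using bsetup.one_nbr[OF swapXY vY S cS] by blast
    have "{s,v} \<in> Q" using col s v by (auto simp: insert_commute)
    then show ?thesis using cs[OF s(1)] by (meson edge_adj rtrancl_trans)
  qed
  have all: "(s0,v) \<in> (adj Q)\<^sup>*" if "v \<in> S \<union> T" for v using cs ct that by auto
  show ?thesis unfolding connc_def
    using all rt_sym rtrancl_trans by metis
qed

lemma greedy_aux:
  assumes "finite Z"
  shows "Z \<subseteq> X \<Longrightarrow> K \<subseteq> E \<Longrightarrow> \<forall>z\<in>Z. real m - d \<le> real (card {y\<in>Y. {z,y} \<in> K}) \<Longrightarrow>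
    \<exists>F. F \<subseteq> K \<and> disjoint F \<and> finite F \<and> (\<forall>e\<in>F. \<exists>z\<in>Z. \<exists>y\<in>Y. e = {z,y}) \<and>
        min (real (card Z)) (real m - d) \<le> real (card F)"
  using assms
proof (induction Z rule: finite_induct)
  case empty
  show ?case by (rule exI[of _ "{}"]) auto
next
  case (insert z Z)
  obtain F where F: "F \<subseteq> K" "disjoint F" "finite F" "\<forall>e\<in>F. \<exists>z\<in>Z. \<exists>y\<in>Y. e = {z,y}"
    "min (real (card Z)) (real m - d) \<le> real (card F)" using insert by auto
  show ?case
  proof (cases "real m - d \<le> real (card F)")
    case True
    then show ?thesis using F by (intro exI[of _ F]) auto
  next
    case False
    define Fy where "Fy = (\<Union>e\<in>F. e \<inter> Y)"
    have e1: "card (e \<inter> Y) = 1" if ein: "e \<in> F" for e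
    proof -
      obtain z' y where "z' \<in> Z" "y \<in> Y" "e = {z',y}" using F(4) ein by auto
      moreover have "z' \<notin> Y" using \<open>z' \<in> Z\<close> insert.prems(1) disj by auto
      ultimately have "e \<inter> Y = {y}" by auto
      then show ?thesis by simp
    qed
    have "card Fy \<le> (\<Sum>e\<in>F. card (e \<inter> Y))" unfolding Fy_def by (rule card_UN_le[OF F(3)])
    also have "\<dots> = card F" using e1 by simp
    finally have cFy: "card Fy \<le> card F" .
    define Nz where "Nz = {y\<in>Y. {z,y} \<in> K}"
    have cNz: "real m - d \<le> real (card Nz)" using insert.prems(3) unfolding Nz_def by auto
    have "\<not> Nz \<subseteq> Fy"
    proof
      assume "Nz \<subseteq> Fy"
      moreover have "finite Fy" unfolding Fy_def using finY by auto
      ultimately have "card Nz \<le> card Fy" by (rule card_mono[rotated])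
      then show False using cNz cFy False by linarith
    qed
    then obtain y where y: "y \<in> Y" "{z,y} \<in> K" "y \<notin> Fy" unfolding Nz_def by auto
    have ynot: "y \<notin> \<Union>F" using y(1,3) unfolding Fy_def by auto
    have zX: "z \<in> X" using insert.prems(1) by auto
    define F' where "F' = insert {z,y} F"
    have notin: "{z,y} \<notin> F" using ynot by auto
    have cF': "card F' = card F + 1" unfolding F'_def using notin F(3) by simp
    have "disjoint F'"
      unfolding F'_def
    proof (rule pairwise_insert[THEN iffD2], rule conjI)
      show "pairwise disjnt F" using F(2) .
    next
      show "\<forall>e. e \<in> F \<and> e \<noteq> {z,y} \<longrightarrow> disjnt {z,y} e \<and> disjnt e {z,y}"
      proof (intro allI impI)
      fix e assume e0: "e \<in> F \<and> e \<noteq> {z,y}"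
      then have e: "e \<in> F" "e \<noteq> {z,y}" by auto
      obtain z' y' where zy: "z' \<in> Z" "y' \<in> Y" "e = {z',y'}" using F(4) e(1) by auto
      have "y' \<noteq> y" using ynot e(1) zy by auto
      moreover have "z' \<noteq> z" using zy(1) insert.hyps(2) by auto
      moreover have "z \<noteq> y'" using zX zy(2) disj by auto
      moreover have "y \<noteq> z'" using y(1) zy(1) insert.prems(1) disj by auto
      ultimately have "disjnt {z,y} e" unfolding zy(3) disjnt_def by auto
      then show "disjnt {z,y} e \<and> disjnt e {z,y}" by (simp add: disjnt_sym)
      qed
    qed
    moreover have "F' \<subseteq> K" using F(1) y(2) unfolding F'_def by auto
    moreover have "finite F'" using F(3) unfolding F'_def by auto
    moreover have "\<forall>e\<in>F'. \<exists>z'\<in>insert z Z. \<exists>y\<in>Y. e = {z',y}" using F(4) y(1) unfolding F'_def by auto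
    moreover have "min (real (card (insert z Z))) (real m - d) \<le> real (card F')"
      using F(5) cF' insert.hyps by auto
    ultimately show ?thesis by blast
  qed
qed

lemma greedy:
  assumes "Z \<subseteq> X" "K \<subseteq> E" "\<forall>z\<in>Z. real m - d \<le> real (card {y\<in>Y. {z,y} \<in> K})"
  shows "\<exists>F. F \<subseteq> K \<and> disjoint F \<and> finite F \<and> min (real (card Z)) (real m - d) \<le> real (card F)"
  using greedy_aux[of Z K d] assms finX finite_subset by blast

end

lemma card_split: "finite A \<Longrightarrow> card (A \<inter> C) + card (A - C) = card A"
  by (metis Diff_Diff_Int Diff_subset Int_Diff_Un card_Un_disjoint finite_Diff finite_Int Diff_disjoint Int_commute inf_commute)

context bsetup begin

lemma Hset_E: "Hset R B Cr Cb \<subseteq> E" using RB unfolding Hset_def by auto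

lemma barrier:
  assumes "connc R Cr" "connc B Cb" "\<not> good R B m \<delta>"
  shows "\<exists>S T. S \<subseteq> X \<and> T \<subseteq> Y \<and> (\<forall>s\<in>S. \<forall>t\<in>T. {s,t} \<notin> Hset R B Cr Cb) \<and>
           real m + 4*\<delta> < real (card S) + real (card T)"
proof -
  define K where "K = Hset R B Cr Cb \<inter> E"
  define N where "N = (\<lambda>x. {y\<in>Y. {x,y} \<in> K})"
  define d where "d = nat \<lfloor>4*\<delta>\<rfloor>"
  have dr: "real d = real_of_int \<lfloor>4*\<delta>\<rfloor>" using dpos unfolding d_def by simp
  have dle: "real d \<le> 4*\<delta>" using dr by linarith
  have dgt: "4*\<delta> < real d + 1" using dr by linarith
  show ?thesis
  proof (cases "\<forall>S\<subseteq>X. card S \<le> card (\<Union>(N ` S)) + d")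
    case True
    have "\<forall>x\<in>X. finite (N x)" using finY unfolding N_def by auto
    then obtain A f where A: "A \<subseteq> X" "card X \<le> card A + d" "inj_on f A" "\<forall>x\<in>A. f x \<in> N x"
      using hall_def[OF finX _ True] by blast
    define F where "F = (\<lambda>x. {x, f x}) ` A"
    have fY: "\<forall>x\<in>A. f x \<in> Y \<and> {x, f x} \<in> K" using A(4) unfolding N_def by auto
    have inj: "inj_on (\<lambda>x. {x, f x}) A"
      unfolding inj_on_def
    proof (intro ballI impI)
      fix a b assume ab: "a \<in> A" "b \<in> A" "{a, f a} = {b, f b}"
      then have "a = b \<or> (a = f b \<and> f a = b)" by (auto simp add: doubleton_eq_iff)
      moreover have "a \<noteq> f b" using ab fY A(1) disj by auto
      ultimately show "a = b" by auto
    qed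
    have cF: "card F = card A" using inj unfolding F_def by (simp add: card_image)
    have "disjoint F"
      unfolding disjoint_def F_def
    proof (intro ballI impI)
      fix e1 e2 assume e: "e1 \<in> (\<lambda>x. {x, f x}) ` A" "e2 \<in> (\<lambda>x. {x, f x}) ` A" "e1 \<noteq> e2"
      then obtain a b where ab: "a \<in> A" "b \<in> A" "e1 = {a, f a}" "e2 = {b, f b}" by auto
      then have "a \<noteq> b" using e(3) by auto
      moreover have "f a \<noteq> f b" using \<open>a \<noteq> b\<close> A(3) ab unfolding inj_on_def by auto
      moreover have "a \<noteq> f b" "f a \<noteq> b" using ab fY A(1) disj by auto
      ultimately show "e1 \<inter> e2 = {}" using ab by auto
    qed
    moreover have "F \<subseteq> Hset R B Cr Cb" using fY unfolding F_def K_def by auto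
    moreover have "finite F" unfolding F_def using A(1) finX finite_subset by auto
    moreover have "real m - 4*\<delta> \<le> real (card F)" using cF A(2) cX dle by linarith
    ultimately have "good R B m \<delta>" unfolding good_def using assms(1,2) by blast
    then show ?thesis using assms(3) by blast
  next
    case False
    then obtain S where S: "S \<subseteq> X" "card (\<Union>(N ` S)) + d < card S" by (auto simp: not_le)
    define T where "T = Y - \<Union>(N ` S)"
    have sub: "\<Union>(N ` S) \<subseteq> Y" unfolding N_def by auto
    have cT: "card T = m - card (\<Union>(N ` S))" unfolding T_def using sub finY cY
      by (simp add: card_Diff_subset finite_subset)
    have le: "card (\<Union>(N ` S)) \<le> m" using sub finY cY card_mono by metis
    have noH: "\<forall>s\<in>S. \<forall>t\<in>T. {s,t} \<notin> Hset R B Cr Cb"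
    proof (intro ballI)
      fix s t assume st: "s \<in> S" "t \<in> T"
      show "{s,t} \<notin> Hset R B Cr Cb"
      proof
        assume h: "{s,t} \<in> Hset R B Cr Cb"
        then have "{s,t} \<in> K" unfolding K_def using Hset_E by auto
        then have "t \<in> N s" using st unfolding N_def T_def by auto
        then show False using st unfolding T_def by auto
      qed
    qed
    have big: "real m + 4*\<delta> < real (card S) + real (card T)"
      using S(2) cT le dgt by (simp add: of_nat_diff)
    have "T \<subseteq> Y" unfolding T_def by auto
    then show ?thesis using S(1) noH big by blast
  qed
qed

end

context bsetup begin

lemma span_step:
  assumes C: "closedc R C" and cX': "real (card (X - C)) \<le> 2*\<delta>" and cY': "real (card (Y - C)) \<le> 2*\<delta>"
    and Cb: "closedc B Cb" and S: "S \<subseteq> X" and T: "T \<subseteq> Y"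
    and noH: "\<forall>s\<in>S. \<forall>t\<in>T. {s,t} \<notin> Hset R B C Cb"
    and big: "real m + 4*\<delta> < real (card S) + real (card T)"
  shows "\<exists>B2. closedc B B2 \<and> connc B B2 \<and> B2 \<inter> Cb = {} \<and> S \<subseteq> B2 \<and> T \<subseteq> B2"
proof -
  have "card T \<le> m" using T finY cY card_mono by metis
  hence cS: "4*\<delta> < real (card S)" using big by linarith
  have "card S \<le> m" using S finX cX card_mono by metis
  hence cT: "4*\<delta> < real (card T)" using big by linarith
  define S0 where "S0 = S \<inter> C"
  define T0 where "T0 = T \<inter> C"
  have finS: "finite S" using S finX finite_subset by blast
  have finT: "finite T" using T finY finite_subset by blast
  have "card (S - C) \<le> card (X - C)" using S finX by (intro card_mono) auto
  moreover have "card S0 + card (S - C) = card S" unfolding S0_def using card_split[OF finS] .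
  ultimately have cS0: "2*\<delta> < real (card S0)" using cS cX' by linarith
  have "card (T - C) \<le> card (Y - C)" using T finY by (intro card_mono) auto
  moreover have "card T0 + card (T - C) = card T" unfolding T0_def using card_split[OF finT] .
  ultimately have cT0: "2*\<delta> < real (card T0)" using cT cY' by linarith
  have blue: "{s,t} \<in> B \<and> s \<notin> Cb \<and> t \<notin> Cb"
    if st: "s \<in> S" "t \<in> T" "{s,t} \<in> E" "s \<in> C \<or> t \<in> C" for s t
  proof -
    have nH: "{s,t} \<notin> Hset R B C Cb" using noH st by auto
    have "{s,t} \<notin> R"
    proof
      assume r: "{s,t} \<in> R"
      have "s \<in> C \<and> t \<in> C"
        using st(4) C r unfolding closedc_def by (metis insert_commute)
      then show False using nH r unfolding Hset_def by auto
    qed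
    then have b: "{s,t} \<in> B" using st(3) RB by auto
    have "\<not> (s \<in> Cb \<or> t \<in> Cb)"
    proof
      assume "s \<in> Cb \<or> t \<in> Cb"
      then have "s \<in> Cb \<and> t \<in> Cb" using Cb b unfolding closedc_def by (metis insert_commute)
      then show False using nH b unfolding Hset_def by auto
    qed
    then show ?thesis using b by auto
  qed
  have T0T: "T0 \<subseteq> T" "T0 \<subseteq> Y" "S0 \<subseteq> S" "S0 \<subseteq> X" using S T unfolding S0_def T0_def by auto
  have c1: "connc B (S \<union> T0)"
    by (rule L1) (use S T0T cT0 cS dpos blue in \<open>auto simp: T0_def\<close>)
  have c2: "connc B (S0 \<union> T)"
    by (rule L1) (use S0_def S T T0T cT cS0 dpos blue in \<open>auto\<close>)
  have "S0 \<noteq> {}" using cS0 dpos by auto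
  then obtain s0 where s0: "s0 \<in> S0" by auto
  have cST: "connc B ((S \<union> T0) \<union> (S0 \<union> T))"
    by (rule conn_union[OF c1 c2, of s0 s0]) (use s0 T0T in auto)
  have eqU: "(S \<union> T0) \<union> (S0 \<union> T) = S \<union> T" using T0T by auto
  define B2 where "B2 = compc B s0"
  have sub: "S \<union> T \<subseteq> B2" unfolding B2_def
    by (rule conn_sub_comp) (use cST eqU s0 T0T in auto)
  have "s0 \<notin> Cb"
  proof -
    have "s0 \<in> X" using s0 T0T by auto
    then obtain t where t: "t \<in> T" "{s0,t} \<in> E" using one_nbr[of s0 T] T cT dpos by auto
    then show ?thesis using blue[of s0 t] s0 unfolding S0_def by auto
  qed
  have "B2 \<inter> Cb = {}"
  proof (rule ccontr)
    assume "B2 \<inter> Cb \<noteq> {}"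
    then obtain v where v: "v \<in> B2" "v \<in> Cb" by auto
    then have "(v,s0) \<in> (adj B)\<^sup>*" unfolding B2_def compc_def using rt_sym by auto
    then have "s0 \<in> Cb" using closed_rt Cb v(2) by metis
    then show False using \<open>s0 \<notin> Cb\<close> by auto
  qed
  moreover have "closedc B B2" unfolding B2_def by (rule comp_closed)
  moreover have "connc B B2" unfolding B2_def by (rule comp_conn)
  ultimately show ?thesis using sub by (intro exI[of _ B2]) auto
qed

lemma span:
  assumes C: "closedc R C" "connc R C" and cX': "real (card (X - C)) \<le> 2*\<delta>" and cY': "real (card (Y - C)) \<le> 2*\<delta>"
  shows "good R B m \<delta>"
proof (rule ccontr)
  assume ng: "\<not> good R B m \<delta>"
  obtain S T where ST: "S \<subseteq> X" "T \<subseteq> Y" "\<forall>s\<in>S. \<forall>t\<in>T. {s,t} \<notin> Hset R B C {}"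
      "real m + 4*\<delta> < real (card S) + real (card T)"
    using barrier[OF C(2) conn_empty ng] by blast
  obtain B2 where B2: "closedc B B2" "connc B B2" "S \<subseteq> B2" "T \<subseteq> B2"
    using span_step[OF C(1) cX' cY' closed_empty ST] by blast
  obtain S' T' where ST': "S' \<subseteq> X" "T' \<subseteq> Y" "\<forall>s\<in>S'. \<forall>t\<in>T'. {s,t} \<notin> Hset R B C B2"
      "real m + 4*\<delta> < real (card S') + real (card T')"
    using barrier[OF C(2) B2(2) ng] by blast
  obtain B3 where B3: "B3 \<inter> B2 = {}" "S' \<subseteq> B3" "T' \<subseteq> B3"
    using span_step[OF C(1) cX' cY' B2(1) ST'] by blast
  have d1: "S \<inter> S' = {}" "T \<inter> T' = {}" using B2 B3 by auto
  have fS: "finite S" "finite S'" using ST(1) ST'(1) finX finite_subset by auto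
  have fT: "finite T" "finite T'" using ST(2) ST'(2) finY finite_subset by auto
  have "card S + card S' = card (S \<union> S')" using d1 fS by (simp add: card_Un_disjoint)
  also have "\<dots> \<le> m" using ST(1) ST'(1) finX cX by (metis Un_least card_mono)
  finally have s: "card S + card S' \<le> m" .
  have "card T + card T' = card (T \<union> T')" using d1 fT by (simp add: card_Un_disjoint)
  also have "\<dots> \<le> m" using ST(2) ST'(2) finY cY by (metis Un_least card_mono)
  finally have t: "card T + card T' \<le> m" .
  show False using s t ST(4) ST'(4) dpos by linarith
qed

end

context bsetup begin

lemma closed_edge: "closedc Q C \<Longrightarrow> {u,v} \<in> Q \<Longrightarrow> u \<in> C \<or> v \<in> C \<Longrightarrow> u \<in> C \<and> v \<in> C"
  unfolding closedc_def by (metis insert_commute)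

lemma main1:
  assumes C: "closedc R C" "connc R C" and cx: "2*\<delta> < real (card (X \<inter> C))"
    and cy: "2*\<delta> < real (card (Y \<inter> C))"
  shows "good R B m \<delta>"
proof -
  have sx: "card (X \<inter> C) + card (X - C) = m" using card_split[OF finX] cX by simp
  have sy: "card (Y \<inter> C) + card (Y - C) = m" using card_split[OF finY] cY by simp
  have rc: "{s,t} \<in> B" if "{s,t} \<in> E" "(s \<in> C \<and> t \<notin> C) \<or> (s \<notin> C \<and> t \<in> C)" for s t
  proof -
    have "{s,t} \<notin> R" using closed_edge[OF C(1), of s t] that(2) by auto
    then show ?thesis using that(1) RB by auto
  qed
  show ?thesis
  proof (cases "real (card (X - C)) \<le> 2*\<delta>"; cases "real (card (Y - C)) \<le> 2*\<delta>")
    assume "real (card (X - C)) \<le> 2*\<delta>" "real (card (Y - C)) \<le> 2*\<delta>"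
    then show ?thesis using span C by blast
  next
    assume a: "\<not> real (card (X - C)) \<le> 2*\<delta>" "\<not> real (card (Y - C)) \<le> 2*\<delta>"
    define P1 where "P1 = (X \<inter> C) \<union> (Y - C)"
    define P2 where "P2 = (X - C) \<union> (Y \<inter> C)"
    have c1: "connc B P1" unfolding P1_def
      by (rule L1) (use a cx dpos rc in auto)
    have c2: "connc B P2" unfolding P2_def
      by (rule L1) (use a cy dpos rc in auto)
    show ?thesis
    proof (cases "\<exists>u\<in>P1. \<exists>v\<in>P2. {u,v} \<in> B")
      case True
      then obtain u v where uv: "u \<in> P1" "v \<in> P2" "{u,v} \<in> B" by auto
      have cU: "connc B (P1 \<union> P2)" by (rule conn_union[OF c1 c2 uv(1,2) edge_adj[OF uv(3)]])
      have eq: "P1 \<union> P2 = X \<union> Y" unfolding P1_def P2_def by auto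
      have cl: "closedc B (X \<union> Y)" unfolding closedc_def using RB edge_sub by blast
      have e1: "X - (X \<union> Y) = {}" "Y - (X \<union> Y) = {}" by auto
      have "good B R m \<delta>"
        using bsetup.span[OF swapRB cl] cU eq dpos unfolding e1 by simp
      then show ?thesis by (rule good_swap)
    next
      case False
      have "splitRB X Y R B"
        unfolding splitRB_def
      proof (intro exI conjI)
        show "(X \<inter> C) \<union> (X - C) = X" "(X \<inter> C) \<inter> (X - C) = {}" "(Y - C) \<union> (Y \<inter> C) = Y"
          "(Y - C) \<inter> (Y \<inter> C) = {}" by auto
        show "\<forall>a\<in>X \<inter> C. \<forall>c\<in>Y - C. {a, c} \<notin> R" using closed_edge[OF C(1)] by blast
        show "\<forall>b\<in>X - C. \<forall>d\<in>Y \<inter> C. {b, d} \<notin> R" using closed_edge[OF C(1)] by blast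
        show "\<forall>a\<in>X \<inter> C. \<forall>d\<in>Y \<inter> C. {a, d} \<notin> B" using False unfolding P1_def P2_def by auto
        show "\<forall>b\<in>X - C. \<forall>c\<in>Y - C. {b, c} \<notin> B"
        proof (intro ballI)
          fix b c assume "b \<in> X - C" "c \<in> Y - C"
          then have "c \<in> P1" "b \<in> P2" by (auto simp: P1_def P2_def)
          then have "{c,b} \<notin> B" using False by auto
          then show "{b,c} \<notin> B" by (simp add: insert_commute)
        qed
      qed
      then show ?thesis using nsplit by blast
    qed
  next
    assume a: "\<not> real (card (X - C)) \<le> 2*\<delta>" "real (card (Y - C)) \<le> 2*\<delta>"
    define P2 where "P2 = (X - C) \<union> (Y \<inter> C)"
    have c2: "connc B P2" unfolding P2_def
      by (rule L1) (use a cy dpos rc in auto)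
    have "Y \<inter> C \<noteq> {}" using cy dpos by auto
    then obtain y0 where y0: "y0 \<in> Y \<inter> C" by auto
    define Cb where "Cb = compc B y0"
    have P2C: "P2 \<subseteq> Cb" unfolding Cb_def by (rule conn_sub_comp[OF c2]) (use y0 P2_def in auto)
    define K where "K = Hset R B C Cb \<inter> E"
    have allH: "{z,x} \<in> K" if "z \<in> Y \<inter> C" "{z,x} \<in> E" for z x
    proof (cases "{z,x} \<in> R")
      case True
      then have "x \<in> C" using closed_edge[OF C(1)] that(1) by blast
      then show ?thesis using True that unfolding K_def Hset_def by auto
    next
      case False
      then have b: "{z,x} \<in> B" using that(2) RB by auto
      have "z \<in> Cb" using that(1) P2C unfolding P2_def by auto
      then have "x \<in> Cb" using closed_edge[OF comp_closed b] unfolding Cb_def by blast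
      then show ?thesis using b \<open>z \<in> Cb\<close> that unfolding K_def Hset_def by auto
    qed
    have degZ: "real m - \<delta> \<le> real (card {x\<in>X. {z,x} \<in> K})" if z: "z \<in> Y \<inter> C" for z
    proof -
      have "{v. {z,v} \<in> E} \<subseteq> {x\<in>X. {z,x} \<in> K}"
        using allH[OF z] bsetup.nbrY[OF swapXY, of z] z by auto
      then have "card {v. {z,v} \<in> E} \<le> card {x\<in>X. {z,x} \<in> K}" using finX by (intro card_mono) auto
      moreover have "real m - \<delta> \<le> real (card {v. {z,v} \<in> E})" using deg z by auto
      ultimately show ?thesis by linarith
    qed
    obtain F where F: "F \<subseteq> K" "disjoint F" "finite F"
        "min (real (card (Y \<inter> C))) (real m - \<delta>) \<le> real (card F)"
      using bsetup.greedy[OF swapXY, of "Y \<inter> C" K \<delta>] degZ unfolding K_def using Hset_E by auto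
    have "real m - 4*\<delta> \<le> real (card F)" using F(4) sy a(2) dpos by linarith
    moreover have "connc B Cb" unfolding Cb_def by (rule comp_conn)
    moreover have "F \<subseteq> Hset R B C Cb" using F(1) unfolding K_def by auto
    ultimately show ?thesis unfolding good_def using C(2) F(2,3) by blast
  next
    assume a: "real (card (X - C)) \<le> 2*\<delta>" "\<not> real (card (Y - C)) \<le> 2*\<delta>"
    define P1 where "P1 = (X \<inter> C) \<union> (Y - C)"
    have c1: "connc B P1" unfolding P1_def
      by (rule L1) (use a cx dpos rc in auto)
    have "X \<inter> C \<noteq> {}" using cx dpos by auto
    then obtain x0 where x0: "x0 \<in> X \<inter> C" by auto
    define Cb where "Cb = compc B x0"
    have P1C: "P1 \<subseteq> Cb" unfolding Cb_def by (rule conn_sub_comp[OF c1]) (use x0 P1_def in auto)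
    define K where "K = Hset R B C Cb \<inter> E"
    have allH: "{z,x} \<in> K" if "z \<in> X \<inter> C" "{z,x} \<in> E" for z x
    proof (cases "{z,x} \<in> R")
      case True
      then have "x \<in> C" using closed_edge[OF C(1)] that(1) by blast
      then show ?thesis using True that unfolding K_def Hset_def by auto
    next
      case False
      then have b: "{z,x} \<in> B" using that(2) RB by auto
      have "z \<in> Cb" using that(1) P1C unfolding P1_def by auto
      then have "x \<in> Cb" using closed_edge[OF comp_closed b] unfolding Cb_def by blast
      then show ?thesis using b \<open>z \<in> Cb\<close> that unfolding K_def Hset_def by auto
    qed
    have degZ: "real m - \<delta> \<le> real (card {y\<in>Y. {z,y} \<in> K})" if z: "z \<in> X \<inter> C" for z
    proof -
      have "{v. {z,v} \<in> E} \<subseteq> {y\<in>Y. {z,y} \<in> K}"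
        using allH[OF z] nbrY[of z] z by auto
      then have "card {v. {z,v} \<in> E} \<le> card {y\<in>Y. {z,y} \<in> K}" using finY by (intro card_mono) auto
      moreover have "real m - \<delta> \<le> real (card {v. {z,v} \<in> E})" using deg z by auto
      ultimately show ?thesis by linarith
    qed
    obtain F where F: "F \<subseteq> K" "disjoint F" "finite F"
        "min (real (card (X \<inter> C))) (real m - \<delta>) \<le> real (card F)"
      using greedy[of "X \<inter> C" K \<delta>] degZ unfolding K_def using Hset_E by auto
    have "real m - 4*\<delta> \<le> real (card F)" using F(4) sx a(1) dpos by linarith
    moreover have "connc B Cb" unfolding Cb_def by (rule comp_conn)
    moreover have "F \<subseteq> Hset R B C Cb" using F(1) unfolding K_def by auto
    ultimately show ?thesis unfolding good_def using C(2) F(2,3) by blast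
  qed
qed

end

context bsetup begin

lemma main_half:
  assumes x: "x \<in> X" and r: "2*\<delta> < real (card {y. {x,y} \<in> R})"
  shows "good R B m \<delta>"
proof -
  define D where "D = compc R x"
  have Dc: "closedc R D" "connc R D" unfolding D_def by (rule comp_closed, rule comp_conn)
  have "{y. {x,y} \<in> R} \<subseteq> Y \<inter> D"
  proof
    fix y assume "y \<in> {y. {x,y} \<in> R}"
    then have h: "{x,y} \<in> R" by auto
    then have "y \<in> Y" using nbrY[OF x] RB by auto
    moreover have "y \<in> D" using edge_adj[OF h] unfolding D_def compc_def by auto
    ultimately show "y \<in> Y \<inter> D" by auto
  qed
  then have "card {y. {x,y} \<in> R} \<le> card (Y \<inter> D)" using finY by (intro card_mono) auto
  then have cy: "2*\<delta> < real (card (Y \<inter> D))" using r by linarith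
  show ?thesis
  proof (cases "2*\<delta> < real (card (X \<inter> D))")
    case True
    then show ?thesis using main1[OF Dc True cy] by blast
  next
    case False
    have sx: "card (X \<inter> D) + card (X - D) = m" using card_split[OF finX] cX by simp
    have cS0: "2*\<delta> < real (card (X - D))" using False sx dm dpos by linarith
    have col: "\<forall>s\<in>X - D. \<forall>t\<in>Y \<inter> D. {s,t} \<in> E \<longrightarrow> {s,t} \<in> B"
    proof (intro ballI impI)
      fix s t assume st: "s \<in> X - D" "t \<in> Y \<inter> D" "{s,t} \<in> E"
      have "{s,t} \<notin> R" using closed_edge[OF Dc(1), of s t] st by auto
      then show "{s,t} \<in> B" using st(3) RB by auto
    qed
    have c: "connc B ((X - D) \<union> (Y \<inter> D))"
      by (rule L1) (use cy cS0 dpos col in auto)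
    have "X - D \<noteq> {}" proof assume "X - D = {}" then have "card (X - D) = 0" by (metis card.empty) then show False using cS0 dpos by simp qed
    then obtain s0 where s0: "s0 \<in> X - D" by auto
    define D' where "D' = compc B s0"
    have sub: "(X - D) \<union> (Y \<inter> D) \<subseteq> D'" unfolding D'_def by (rule conn_sub_comp[OF c]) (use s0 in auto)
    have "card (X - D) \<le> card (X \<inter> D')" using sub finX by (intro card_mono) auto
    then have c1: "2*\<delta> < real (card (X \<inter> D'))" using cS0 by linarith
    have "card (Y \<inter> D) \<le> card (Y \<inter> D')" using sub finY by (intro card_mono) auto
    then have c2: "2*\<delta> < real (card (Y \<inter> D'))" using cy by linarith
    have "closedc B D'" "connc B D'" unfolding D'_def by (rule comp_closed, rule comp_conn)
    then have "good B R m \<delta>" using bsetup.main1[OF swapRB _ _ c1 c2] by blast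
    then show ?thesis by (rule good_swap)
  qed
qed

lemma main: "good R B m \<delta>"
proof -
  have "m > 0" using dm dpos by (cases m) auto
  then have "X \<noteq> {}" using cX by auto
  then obtain x where x: "x \<in> X" by auto
  have "{v. {x,v} \<in> E} = {y. {x,y} \<in> R} \<union> {y. {x,y} \<in> B}" using RB by auto
  moreover have "finite {y. {x,y} \<in> R}" "finite {y. {x,y} \<in> B}"
    using nbrY[OF x] RB finY by (auto intro: finite_subset)
  ultimately have "card {v. {x,v} \<in> E} \<le> card {y. {x,y} \<in> R} + card {y. {x,y} \<in> B}"
    by (simp add: card_Un_le)
  moreover have "real m - \<delta> \<le> real (card {v. {x,v} \<in> E})" using deg x by auto
  ultimately have "2*\<delta> < real (card {y. {x,y} \<in> R}) \<or> 2*\<delta> < real (card {y. {x,y} \<in> B})"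
    using dm dpos by linarith
  then show ?thesis
  proof
    assume "2*\<delta> < real (card {y. {x,y} \<in> R})"
    then show ?thesis using main_half[OF x] by blast
  next
    assume "2*\<delta> < real (card {y. {x,y} \<in> B})"
    then have "good B R m \<delta>" using bsetup.main_half[OF swapRB x] by blast
    then show ?thesis by (rule good_swap)
  qed
qed

end

theorem lemma4p3:
  fixes V1 V2 :: "'a set" and E R :: "'a set set" and \<epsilon> :: real and n :: nat
  assumes "0 < \<epsilon>" and "\<epsilon> < 1/5"
    and "bipartite_graph V1 V2 E"
    and "card V1 = card V2"
    and "n = card (V1 \<union> V2)"
    and "\<forall>u \<in> V1 \<union> V2. real (degree E u) \<ge> (1 - \<epsilon>) * real n / 2"
    and "R \<subseteq> E"
    and "\<not> split_colouring V1 V2 E R"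
  shows "\<exists>Mr Mb. connected_matching R Mr \<and> connected_matching (E - R) Mb \<and>
           \<Union>Mr \<inter> \<Union>Mb = {} \<and>
           real (card ((V1 \<union> V2) - (\<Union>Mr \<union> \<Union>Mb))) \<le> 4 * \<epsilon> * real n"
proof -
  note bg = assms(3)[unfolded bipartite_graph_def]
  have fin1: "finite V1" and fin2: "finite V2" and dj: "V1 \<inter> V2 = {}"
    and Esub: "E \<subseteq> {{u, v} | u v. u \<in> V1 \<and> v \<in> V2}" using bg by auto
  define m where "m = card V1"
  have n2: "n = 2*m" using assms(4,5) fin1 fin2 dj unfolding m_def by (simp add: card_Un_disjoint)
  show ?thesis
  proof (cases "m = 0")
    case True
    then have "V1 = {}" "V2 = {}" using fin1 fin2 assms(4) unfolding m_def by auto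
    moreover have "connected_matching Q {}" for Q :: "'a set set"
      unfolding connected_matching_def matching_def by auto
    ultimately show ?thesis using assms(1) by (intro exI[of _ "{}"]) auto
  next
    case False
    define \<delta> where "\<delta> = \<epsilon> * real m"
    have stp: "bsetup V1 V2 E R (E - R) m \<delta>"
      unfolding bsetup_def
    proof (intro conjI)
      show "finite V1" "finite V2" "V1 \<inter> V2 = {}" "card V1 = m" "card V2 = m"
        using fin1 fin2 dj assms(4) unfolding m_def by auto
      show "\<forall>e\<in>E. \<exists>x\<in>V1. \<exists>y\<in>V2. e = {x, y}" using Esub by blast
      show "R \<union> (E - R) = E" "R \<inter> (E - R) = {}" using assms(7) by auto
      show "\<forall>u\<in>V1 \<union> V2. real m - \<delta> \<le> real (card {v. {u, v} \<in> E})"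
      proof
        fix u assume "u \<in> V1 \<union> V2"
        then have "(1 - \<epsilon>) * real n / 2 \<le> real (degree E u)" using assms(6) by auto
        moreover have "(1 - \<epsilon>) * real n / 2 = real m - \<delta>" unfolding \<delta>_def n2 by (simp add: field_simps)
        ultimately show "real m - \<delta> \<le> real (card {v. {u, v} \<in> E})" unfolding degree_def by simp
      qed
      show "0 \<le> \<delta>" unfolding \<delta>_def using assms(1) by simp
      show "5 * \<delta> < real m" unfolding \<delta>_def using assms(2) False by simp
      show "\<not> splitRB V1 V2 R (E - R)"
      proof
        assume "splitRB V1 V2 R (E - R)"
        then obtain A A' C D where h: "A \<union> A' = V1" "A \<inter> A' = {}" "C \<union> D = V2" "C \<inter> D = {}"
          "\<forall>a\<in>A. \<forall>c\<in>C. {a,c} \<notin> R" "\<forall>b\<in>A'. \<forall>d\<in>D. {b,d} \<notin> R"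
          "\<forall>a\<in>A. \<forall>d\<in>D. {a,d} \<notin> E - R" "\<forall>b\<in>A'. \<forall>c\<in>C. {b,c} \<notin> E - R"
          unfolding splitRB_def by blast
        have "split_colouring V1 V2 E R"
          unfolding split_colouring_def
          by (rule exI[of _ A], rule exI[of _ A'], rule exI[of _ C], rule exI[of _ D]) (use h in auto)
        then show False using assms(8) by blast
      qed
    qed
    obtain Cr Cb F where F: "connc R Cr" "connc (E - R) Cb" "F \<subseteq> Hset R (E - R) Cr Cb"
        "disjoint F" "finite F" "real m - 4*\<delta> \<le> real (card F)"
      using bsetup.main[OF stp] unfolding good_def by blast
    define Mr where "Mr = F \<inter> R"
    define Mb where "Mb = F \<inter> (E - R)"
    have FH: "e \<in> R \<and> e \<subseteq> Cr \<or> e \<in> E - R \<and> e \<subseteq> Cb" if "e \<in> F" for e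
      using F(3) that unfolding Hset_def by auto
    have FE: "F \<subseteq> E" using FH assms(7) by blast
    have cm1: "connected_matching R Mr"
      unfolding connected_matching_def matching_def
    proof (intro conjI)
      show "Mr \<subseteq> R" unfolding Mr_def by auto
      show "disjoint Mr" unfolding Mr_def using F(4) pairwise_subset by blast
      show "\<forall>e\<in>Mr. \<forall>f\<in>Mr. \<forall>u\<in>e. \<forall>v\<in>f. (u, v) \<in> (adj R)\<^sup>*"
        using FH F(1) unfolding Mr_def connc_def by blast
    qed
    have cm2: "connected_matching (E - R) Mb"
      unfolding connected_matching_def matching_def
    proof (intro conjI)
      show "Mb \<subseteq> E - R" unfolding Mb_def by auto
      show "disjoint Mb" unfolding Mb_def using F(4) pairwise_subset by blast
      show "\<forall>e\<in>Mb. \<forall>f\<in>Mb. \<forall>u\<in>e. \<forall>v\<in>f. (u, v) \<in> (adj (E - R))\<^sup>*"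
        using FH F(2) unfolding Mb_def connc_def by blast
    qed
    have dis: "\<Union>Mr \<inter> \<Union>Mb = {}"
    proof -
      have "e \<inter> f = {}" if "e \<in> Mr" "f \<in> Mb" for e f
      proof -
        have "e \<noteq> f" using that unfolding Mr_def Mb_def by auto
        moreover have "e \<in> F" "f \<in> F" using that unfolding Mr_def Mb_def by auto
        ultimately show ?thesis using F(4) unfolding disjoint_def by blast
      qed
      then show ?thesis by blast
    qed
    have UF: "\<Union>Mr \<union> \<Union>Mb = \<Union>F" unfolding Mr_def Mb_def using FE by blast
    have e2: "card e = 2" if eF: "e \<in> F" for e
    proof -
      obtain x y where "x \<in> V1" "y \<in> V2" "e = {x,y}" using Esub FE eF by blast
      moreover then have "x \<noteq> y" using dj by auto
      ultimately show ?thesis by simp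
    qed
    have cU: "card (\<Union>F) = 2 * card F"
    proof -
      have "card (\<Union>F) = sum card F"
        by (rule card_Union_disjoint) (use F(4) e2 in \<open>auto intro: card_ge_0_finite\<close>)
      also have "\<dots> = sum (\<lambda>_. 2) F" using e2 by (intro sum.cong) auto
      finally show ?thesis by simp
    qed
    have subV: "\<Union>F \<subseteq> V1 \<union> V2" using FE Esub by blast
    have "card ((V1 \<union> V2) - \<Union>F) = card (V1 \<union> V2) - card (\<Union>F)"
      using subV fin1 fin2 by (simp add: card_Diff_subset finite_subset)
    moreover have "card (\<Union>F) \<le> card (V1 \<union> V2)" using subV fin1 fin2 by (simp add: card_mono)
    ultimately have "real (card ((V1 \<union> V2) - \<Union>F)) = real n - 2 * real (card F)"
      using cU assms(5) by (simp add: of_nat_diff)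
    also have "\<dots> \<le> 4 * \<epsilon> * real n" using F(6) n2 unfolding \<delta>_def by simp
    finally show ?thesis using cm1 cm2 dis UF by metis
  qed
qed

end
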